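(* For $m\ge 3$, the group $\mathrm{SL}_m(\mathbb{Z})$ has exponential automorphic growth.
   Context: For a finitely generated group $G$ with finite generating set $\Sigma$, the automorphic growth function sends $n$ to the number of $\operatorname{Aut}(G)$-orbits of $G$ containing an element of word length at most $n$. Exponential means it is $\sim$-equivalent to $n\mapsto 2^n$, where $f\sim g$ iff $f\preccurlyeq g$ and $g\preccurlyeq f$, and $f\preccurlyeq g$ means there is $\lambda\in\mathbb{N}\setminus\{0\}$ with $f(n)\le\lambda g(\lambda n+\lambda)+\lambda$ for all $n$. *)

theory Defs
  imports "HOL-Analysis.Determinants" "HOL-Algebra.Generated_Groups"
begin

definition growth_le :: "(nat \<Rightarrow> nat) \<Rightarrow> (nat \<Rightarrow> nat) \<Rightarrow> bool" where
  "growth_le f g \<longleftrightarrow> (\<exists>l::nat. l \<noteq> 0 \<and> (\<forall>n. f n \<le> l * g (l * n + l) + l))"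

definition growth_equiv :: "(nat \<Rightarrow> nat) \<Rightarrow> (nat \<Rightarrow> nat) \<Rightarrow> bool" where
  "growth_equiv f g \<longleftrightarrow> growth_le f g \<and> growth_le g f"

text \<open>A word over S is a list of letters (b, s) with s in S; (True, s) stands for s and
  (False, s) for the inverse of s.\<close>

definition word_eval :: "('a, 'b) monoid_scheme \<Rightarrow> (bool \<times> 'a) list \<Rightarrow> 'a" where
  "word_eval G w = foldr (\<lambda>(b, s) acc. (if b then s else inv\<^bsub>G\<^esub> s) \<otimes>\<^bsub>G\<^esub> acc) w \<one>\<^bsub>G\<^esub>"

definition word_length :: "('a, 'b) monoid_scheme \<Rightarrow> 'a set \<Rightarrow> 'a \<Rightarrow> nat" where
  "word_length G S g =
     (LEAST n. \<exists>w. length w = n \<and> snd ` set w \<subseteq> S \<and> word_eval G w = g)"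

definition aut_orbit :: "('a, 'b) monoid_scheme \<Rightarrow> 'a \<Rightarrow> 'a set" where
  "aut_orbit G g = {\<phi> g | \<phi>. \<phi> \<in> iso G G}"

definition aut_growth :: "('a, 'b) monoid_scheme \<Rightarrow> 'a set \<Rightarrow> nat \<Rightarrow> nat" where
  "aut_growth G S n =
     card {aut_orbit G g | g. g \<in> carrier G \<and> word_length G S g \<le> n}"

definition exponential_aut_growth :: "('a, 'b) monoid_scheme \<Rightarrow> 'a set \<Rightarrow> bool" where
  "exponential_aut_growth G S \<longleftrightarrow> growth_equiv (aut_growth G S) (\<lambda>n. 2 ^ n)"

definition SL_group :: "(int ^ 'n ^ 'n) monoid" where
  "SL_group = \<lparr> carrier = {A. det A = 1}, monoid.mult = (**), one = mat 1 \<rparr>"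

end

theory Submission
  imports Defs "HOL-Computational_Algebra.Squarefree"
begin



definition Ec :: "int \<Rightarrow> 'n::finite \<Rightarrow> 'n \<Rightarrow> int^'n^'n" where
  "Ec x a b = (\<chi> r c. if r = a \<and> c = b then x else 0)"

definition Tr :: "'n::finite \<Rightarrow> 'n \<Rightarrow> int \<Rightarrow> int^'n^'n" where
  "Tr a b x = mat 1 + Ec x a b"

lemma Ec_mult: "Ec x a b ** Ec y c d = (if b = c then Ec (x*y) a d else 0)"
proof -
  have "(Ec x a b ** Ec y c d) $ r $ s = (if b = c then Ec (x*y) a d else 0) $ r $ s" for r s
    by (auto simp: matrix_matrix_mult_def Ec_def if_distrib[of "\<lambda>t. t * _"] sum.delta cong: if_cong)
  then show ?thesis by (simp add: vec_eq_iff)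
qed

lemma matrix_add_rdistrib: "((B + C) ** A) = (B ** A) + (C ** A)"
  by (simp add: matrix_matrix_mult_def vec_eq_iff distrib_right sum.distrib)

lemma Ec_add: "Ec x a b + Ec y a b = Ec (x+y) a b"
  by (simp add: vec_eq_iff Ec_def)

lemma Ec_numeral [simp]: "numeral k * Ec x a b = Ec (numeral k * x) a b"
  by (simp add: vec_eq_iff Ec_def)

lemma Ec_0 [simp]: "Ec 0 a b = 0"
  by (simp add: vec_eq_iff Ec_def)

lemma det_Tr: fixes a b :: "'n::finite" assumes "a \<noteq> b" shows "det (Tr a b x) = 1"
proof -
  have "Tr a b x = (\<chi> k. if k = a then row a (mat 1) + x *s row b (mat 1) else row k (mat 1))"
    using assms by (auto simp: vec_eq_iff Tr_def Ec_def row_def mat_def)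
  then show ?thesis using det_row_operation[OF assms, where c=x and A="mat 1 :: int^'n^'n"] by simp
qed

lemma Tr_mult_same: assumes "a \<noteq> b" shows "Tr a b x ** Tr a b y = Tr a b (x + y)"
  using assms by (simp add: Tr_def matrix_add_ldistrib matrix_add_rdistrib Ec_mult Ec_add add.assoc)

locale ijl =
  fixes i j l :: "'n::finite"
  assumes ij: "i \<noteq> j" and il: "i \<noteq> l" and jl: "j \<noteq> l"
begin

definition u :: "int \<Rightarrow> int \<Rightarrow> int^'n^'n" where "u a b = Tr i l a ** Tr j l b"
definition Am :: "int^'n^'n" where "Am = Tr i j 1 ** Tr j i 1"
definition Ami :: "int^'n^'n" where "Ami = Tr j i (-1) ** Tr i j (-1)"

lemmas dist = ij il jl ij[symmetric] il[symmetric] jl[symmetric]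

lemma u_eq: "u a b = mat 1 + Ec a i l + Ec b j l"
  using dist by (simp add: u_def Tr_def matrix_add_ldistrib matrix_add_rdistrib Ec_mult add.assoc)

lemma u_mult: "u a b ** u c d = u (a+c) (b+d)"
  using dist apply (simp add: u_eq matrix_add_ldistrib matrix_add_rdistrib Ec_mult)
  by (simp add: vec_eq_iff Ec_def)

lemma conjA: "Am ** u a b ** Ami = u (2*a+b) (a+b)"
  using dist apply (simp add: u_eq Am_def Ami_def Tr_def matrix_add_ldistrib matrix_add_rdistrib Ec_mult matrix_mul_assoc)
  using dist by (simp add: vec_eq_iff Ec_def mat_def)

lemma conjAi: "Ami ** u a b ** Am = u (a-b) (2*b-a)"
  using dist apply (simp add: u_eq Am_def Ami_def Tr_def matrix_add_ldistrib matrix_add_rdistrib Ec_mult matrix_mul_assoc)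
  using dist by (simp add: vec_eq_iff Ec_def mat_def)

end




abbreviation SLG :: "(int^'n::finite^'n) monoid" where "SLG \<equiv> SL_group"

lemma SL_carrier: "carrier (SL_group :: (int^'n::finite^'n) monoid) = {A. det A = 1}"
  by (simp add: SL_group_def)
lemma SL_mult [simp]: "x \<otimes>\<^bsub>SL_group\<^esub> y = x ** y"
  by (simp add: SL_group_def)
lemma SL_one [simp]: "\<one>\<^bsub>SL_group\<^esub> = mat 1"
  by (simp add: SL_group_def)

lemma SL_monoid: "monoid (SL_group :: (int^'n::finite^'n) monoid)"
  by (unfold_locales) (auto simp: SL_carrier det_mul matrix_mul_assoc)

lemma SL_pow_Suc: "x [^]\<^bsub>(SL_group :: (int^'n::finite^'n) monoid)\<^esub> Suc k = (x [^]\<^bsub>SL_group\<^esub> k) ** x"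
  by simp

lemma Tr_carrier: "a \<noteq> b \<Longrightarrow> Tr a b x \<in> carrier SL_group"
  by (simp add: SL_carrier det_Tr)

lemma Tr_pow: assumes "a \<noteq> b"
  shows "Tr a b x [^]\<^bsub>(SL_group :: (int^'n::finite^'n) monoid)\<^esub> k = Tr a b (int k * x)"
proof (induction k)
  case 0
  then show ?case by (simp add: Tr_def)
next
  case (Suc k)
  then show ?case using Tr_mult_same[OF assms] by (simp add: algebra_simps)
qed

context ijl begin
lemma u_carrier: "u a b \<in> carrier SL_group"
  using dist by (simp add: u_def SL_carrier det_mul det_Tr)
lemma Am_carrier: "Am \<in> carrier SL_group"
  using dist by (simp add: Am_def SL_carrier det_mul det_Tr)
lemma Ami_carrier: "Ami \<in> carrier SL_group"
  using dist by (simp add: Ami_def SL_carrier det_mul det_Tr)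
end

section \<open>Words\<close>

lemma word_eval_Nil [simp]: "word_eval G [] = \<one>\<^bsub>G\<^esub>"
  by (simp add: word_eval_def)

lemma word_eval_append_SL:
  "word_eval (SL_group :: (int^'n::finite^'n) monoid) (w1 @ w2) =
   word_eval SL_group w1 ** word_eval SL_group w2"
  by (induction w1) (auto simp: word_eval_def matrix_mul_assoc)

lemma word_exists:
  assumes "g \<in> generate (SL_group :: (int^'n::finite^'n) monoid) S"
  shows "\<exists>w. snd ` set w \<subseteq> S \<and> word_eval SL_group w = g"
  using assms
proof (induction rule: generate.induct)
  case one
  then show ?case by (intro exI[of _ "[]"]) simp
next
  case (incl h)
  then show ?case by (intro exI[of _ "[(True, h)]"]) (simp add: word_eval_def)
next
  case (inv h)
  then show ?case by (intro exI[of _ "[(False, h)]"]) (simp add: word_eval_def)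
next
  case (eng h1 h2)
  then obtain w1 w2 where "snd ` set w1 \<subseteq> S" "word_eval SL_group w1 = h1"
     "snd ` set w2 \<subseteq> S" "word_eval SL_group w2 = h2" by blast
  then show ?case by (intro exI[of _ "w1 @ w2"]) (simp add: word_eval_append_SL image_Un)
qed

lemma wl_le: "snd ` set w \<subseteq> S \<Longrightarrow> word_length G S (word_eval G w) \<le> length w"
  unfolding word_length_def by (rule Least_le) blast

lemma wl_witness:
  assumes "\<exists>w. snd ` set w \<subseteq> S \<and> word_eval G w = g"
  shows "\<exists>w. length w = word_length G S g \<and> snd ` set w \<subseteq> S \<and> word_eval G w = g"
  unfolding word_length_def by (rule LeastI_ex) (use assms in blast)

lemma wl_mult:
  assumes gen: "generate (SL_group :: (int^'n::finite^'n) monoid) S = carrier SL_group"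
    and g: "g \<in> carrier SL_group" and h: "h \<in> carrier SL_group"
  shows "word_length SL_group S (g ** h) \<le> word_length SL_group S g + word_length SL_group S h"
proof -
  obtain w1 where w1: "length w1 = word_length SL_group S g" "snd ` set w1 \<subseteq> S" "word_eval SL_group w1 = g"
    using wl_witness[OF word_exists] g gen by metis
  obtain w2 where w2: "length w2 = word_length SL_group S h" "snd ` set w2 \<subseteq> S" "word_eval SL_group w2 = h"
    using wl_witness[OF word_exists] h gen by metis
  have "word_length SL_group S (word_eval SL_group (w1 @ w2)) \<le> length (w1 @ w2)"
    by (rule wl_le) (use w1 w2 in auto)
  then show ?thesis using w1 w2 by (simp add: word_eval_append_SL)
qed

lemma ball_subset:
  assumes gen: "generate (SL_group :: (int^'n::finite^'n) monoid) S = carrier SL_group"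
  shows "{g. g \<in> carrier (SL_group :: (int^'n::finite^'n) monoid) \<and> word_length SL_group S g \<le> n}
     \<subseteq> word_eval SL_group ` {w. set w \<subseteq> UNIV \<times> S \<and> length w \<le> n}"
proof
  fix g assume "g \<in> {g. g \<in> carrier (SL_group :: (int^'n::finite^'n) monoid) \<and> word_length SL_group S g \<le> n}"
  then have g: "g \<in> carrier SL_group" "word_length SL_group S g \<le> n" by auto
  obtain w where w: "length w = word_length SL_group S g" "snd ` set w \<subseteq> S" "word_eval SL_group w = g"
    using wl_witness[OF word_exists] g gen by metis
  have "set w \<subseteq> UNIV \<times> S" using w(2) by force
  then show "g \<in> word_eval SL_group ` {w. set w \<subseteq> UNIV \<times> S \<and> length w \<le> n}"
    using w g by force
qed




lemma orbitset_eq: "{aut_orbit G g | g. g \<in> carrier G \<and> word_length G S g \<le> n} =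
   aut_orbit G ` {g. g \<in> carrier G \<and> word_length G S g \<le> n}"
  by blast

lemma ball_finite_card:
  assumes gen: "generate (SL_group :: (int^'n::finite^'n) monoid) S = carrier SL_group"
    and fin: "finite S"
  shows "finite {g. g \<in> carrier (SL_group :: (int^'n::finite^'n) monoid) \<and> word_length SL_group S g \<le> n}"
    "card {g. g \<in> carrier (SL_group :: (int^'n::finite^'n) monoid) \<and> word_length SL_group S g \<le> n}
       \<le> (\<Sum>i\<le>n. card (UNIV \<times> S :: (bool \<times> _) set) ^ i)"
proof -
  have fA: "finite (UNIV \<times> S :: (bool \<times> _) set)" using fin by simp
  have fW: "finite {w. set w \<subseteq> (UNIV \<times> S :: (bool \<times> _) set) \<and> length w \<le> n}"
    using finite_lists_length_le[OF fA] by simp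
  show "finite {g. g \<in> carrier (SL_group :: (int^'n::finite^'n) monoid) \<and> word_length SL_group S g \<le> n}"
    by (rule finite_subset[OF ball_subset[OF gen]]) (use fW in blast)
  have "card {g. g \<in> carrier (SL_group :: (int^'n::finite^'n) monoid) \<and> word_length SL_group S g \<le> n}
     \<le> card (word_eval SL_group ` {w. set w \<subseteq> (UNIV \<times> S :: (bool \<times> _) set) \<and> length w \<le> n})"
    by (rule card_mono[OF _ ball_subset[OF gen]]) (use fW in blast)
  also have "\<dots> \<le> card {w. set w \<subseteq> (UNIV \<times> S :: (bool \<times> _) set) \<and> length w \<le> n}"
    by (rule card_image_le[OF fW])
  also have "\<dots> = (\<Sum>i\<le>n. card (UNIV \<times> S :: (bool \<times> _) set) ^ i)"
    by (rule card_lists_length_le[OF fA])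
  finally show "card {g. g \<in> carrier (SL_group :: (int^'n::finite^'n) monoid) \<and> word_length SL_group S g \<le> n}
       \<le> (\<Sum>i\<le>n. card (UNIV \<times> S :: (bool \<times> _) set) ^ i)" .
qed

lemma aut_growth_finite:
  assumes gen: "generate (SL_group :: (int^'n::finite^'n) monoid) S = carrier SL_group"
    and fin: "finite S"
  shows "finite {aut_orbit (SL_group :: (int^'n::finite^'n) monoid) g | g. g \<in> carrier SL_group \<and> word_length SL_group S g \<le> n}"
  unfolding orbitset_eq using ball_finite_card(1)[OF gen fin] by blast

lemma geom_bound: "(\<Sum>i\<le>n. (a::nat) ^ i) \<le> 2 ^ ((a+1) * n)"
proof -
  have "(\<Sum>i\<le>n. a ^ i) \<le> (\<Sum>i\<le>n. (2::nat) ^ (a * n))"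
  proof (rule sum_mono)
    fix i assume "i \<in> {..n}"
    then have "i \<le> n" by simp
    have "a ^ i \<le> (2 ^ a) ^ i" by (rule power_mono) (simp_all add: less_imp_le[OF less_exp])
    also have "\<dots> = 2 ^ (a * i)" by (simp add: power_mult)
    also have "\<dots> \<le> 2 ^ (a * n)" using \<open>i \<le> n\<close> by (intro power_increasing) auto
    finally show "a ^ i \<le> 2 ^ (a * n)" .
  qed
  also have "\<dots> = (n + 1) * 2 ^ (a * n)" by simp
  also have "\<dots> \<le> 2 ^ n * 2 ^ (a * n)"
    by (intro mult_right_mono) (simp_all add: Suc_leI less_exp)
  also have "\<dots> = 2 ^ ((a+1) * n)" by (simp add: power_add[symmetric] algebra_simps)
  finally show ?thesis .
qed

lemma upper_bound:
  assumes gen: "generate (SL_group :: (int^'n::finite^'n) monoid) S = carrier SL_group"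
    and fin: "finite S"
  shows "growth_le (aut_growth (SL_group :: (int^'n::finite^'n) monoid) S) (\<lambda>n. 2 ^ n)"
proof -
  define a where "a = card (UNIV \<times> S :: (bool \<times> _) set)"
  define L where "L = a + 1"
  have "aut_growth SL_group S n \<le> L * 2 ^ (L * n + L) + L" for n
  proof -
    have "aut_growth SL_group S n = card (aut_orbit SL_group ` {g. g \<in> carrier (SL_group :: (int^'n::finite^'n) monoid) \<and> word_length SL_group S g \<le> n})"
      unfolding aut_growth_def orbitset_eq ..
    also have "\<dots> \<le> card {g. g \<in> carrier (SL_group :: (int^'n::finite^'n) monoid) \<and> word_length SL_group S g \<le> n}"
      by (rule card_image_le[OF ball_finite_card(1)[OF gen fin]])
    also have "\<dots> \<le> (\<Sum>i\<le>n. a ^ i)" unfolding a_def by (rule ball_finite_card(2)[OF gen fin])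
    also have "\<dots> \<le> 2 ^ (L * n)" unfolding L_def by (rule geom_bound)
    also have "\<dots> \<le> 2 ^ (L * n + L)" by (intro power_increasing) auto
    also have "\<dots> \<le> L * 2 ^ (L * n + L) + L" unfolding L_def by simp
    finally show ?thesis .
  qed
  then show ?thesis unfolding growth_le_def L_def by (intro exI[of _ "a+1"]) simp
qed




section \<open>Periodic points\<close>

lemma funpow_mult_fix: "(T ^^ t) e = e \<Longrightarrow> (T ^^ (t * n)) e = e"
proof (induction n)
  case 0 then show ?case by simp
next
  case (Suc n)
  have "(T ^^ (t * Suc n)) e = (T ^^ t) ((T ^^ (t * n)) e)"
    by (simp add: funpow_add add.commute)
  then show ?case using Suc by simp
qed

lemma funpow_in: "T ` V \<subseteq> V \<Longrightarrow> e \<in> V \<Longrightarrow> (T ^^ k) e \<in> V"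
  by (induction k) auto

lemma period_lemma:
  fixes T :: "'a \<Rightarrow> 'a"
  assumes V: "finite V" "T ` V \<subseteq> V" "e \<in> V" and p: "prime (p::nat)"
    and fix_a: "(T ^^ (p ^ a)) e = e" and card: "card V \<le> p ^ b"
  shows "(T ^^ (p ^ b)) e = e"
proof -
  have p1: "p > 1" using p prime_gt_1_nat by blast
  define t where "t = (LEAST t. 0 < t \<and> (T ^^ t) e = e)"
  have ex: "0 < p ^ a \<and> (T ^^ (p ^ a)) e = e" using fix_a p1 by simp
  have t: "0 < t" "(T ^^ t) e = e" using LeastI_ex[of "\<lambda>t. 0 < t \<and> (T ^^ t) e = e"] ex
    unfolding t_def by blast+
  have tmin: "\<And>s. 0 < s \<Longrightarrow> (T ^^ s) e = e \<Longrightarrow> t \<le> s"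
    unfolding t_def by (rule Least_le) blast
  have tdvd: "t dvd p ^ a"
  proof -
    define q r where "q = p ^ a div t" and "r = p ^ a mod t"
    have pa: "p ^ a = r + t * q" unfolding q_def r_def by simp
    have "(T ^^ (p ^ a)) e = (T ^^ r) ((T ^^ (t * q)) e)" unfolding pa by (simp add: funpow_add)
    then have "(T ^^ r) e = e" using funpow_mult_fix[OF t(2)] fix_a by simp
    moreover have "r < t" unfolding r_def using t(1) by simp
    ultimately have "r = 0" using tmin by (meson leD neq0_conv)
    then show ?thesis unfolding r_def by (simp add: dvd_eq_mod_eq_0)
  qed
  then obtain f where f: "f \<le> a" "t = p ^ f" using divides_primepow_nat[OF p] by blast
  have inj: "inj_on (\<lambda>k. (T ^^ k) e) {..<t}"
  proof (rule inj_onI, rule ccontr)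
    fix k1 k2 assume k: "k1 \<in> {..<t}" "k2 \<in> {..<t}" "(T ^^ k1) e = (T ^^ k2) e" "k1 \<noteq> k2"
    have main: "False" if "k1 < k2" "k2 < t" "(T ^^ k1) e = (T ^^ k2) e" for k1 k2
    proof -
      have "(T ^^ (t - k2 + k1)) e = (T ^^ (t - k2)) ((T ^^ k1) e)" by (simp add: funpow_add)
      also have "\<dots> = (T ^^ (t - k2)) ((T ^^ k2) e)" using that by simp
      also have "\<dots> = (T ^^ (t - k2 + k2)) e" by (simp only: funpow_add comp_apply)
      also have "\<dots> = (T ^^ t) e" using that by simp
      finally have "(T ^^ (t - k2 + k1)) e = e" using t by simp
      moreover have "0 < t - k2 + k1" using that by auto
      ultimately have "t \<le> t - k2 + k1" by (rule tmin[rotated])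
      moreover have "t - k2 + k1 < t" using that by auto
      ultimately show False by linarith
    qed
    show False
    proof (cases "k1 < k2")
      case True then show ?thesis using main[of k1 k2] k by blast
    next
      case False then have "k2 < k1" using k by auto
      then show ?thesis using main[of k2 k1] k by simp
    qed
  qed
  have "(\<lambda>k. (T ^^ k) e) ` {..<t} \<subseteq> V" using funpow_in[OF V(2,3)] by blast
  then have "card ((\<lambda>k. (T ^^ k) e) ` {..<t}) \<le> card V" using V(1) by (rule card_mono[rotated])
  then have "t \<le> card V" using card_image[OF inj] by simp
  then have "p ^ f \<le> p ^ b" using card f by simp
  then have "f \<le> b" using p1 power_le_imp_le_exp by blast
  then have "t dvd p ^ b" using f by (simp add: le_imp_power_dvd)
  then obtain n where "p ^ b = t * n" by blast
  then show ?thesis using funpow_mult_fix[OF t(2)] by simp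
qed

section \<open>Reduction mod p\<close>

definition red :: "int \<Rightarrow> int^'n::finite \<Rightarrow> int^'n" where
  "red p v = (\<chi> r. v $ r mod p)"

lemma red_mult: "red p (x *v red p v) = red p (x *v v)"
proof -
  have "(\<Sum>k\<in>UNIV. x $ r $ k * (v $ k mod p)) mod p = (\<Sum>k\<in>UNIV. x $ r $ k * v $ k) mod p" for r
  proof -
    have "(\<Sum>k\<in>UNIV. x $ r $ k * (v $ k mod p)) mod p = (\<Sum>k\<in>UNIV. x $ r $ k * (v $ k mod p) mod p) mod p"
      by (simp add: mod_sum_eq)
    also have "\<dots> = (\<Sum>k\<in>UNIV. x $ r $ k * v $ k mod p) mod p"
      by (simp add: mod_mult_right_eq)
    also have "\<dots> = (\<Sum>k\<in>UNIV. x $ r $ k * v $ k) mod p"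
      by (simp add: mod_sum_eq)
    finally show ?thesis .
  qed
  then show ?thesis by (simp add: red_def matrix_vector_mult_def vec_eq_iff)
qed

lemma red_iter:
  "((\<lambda>v. red p (x *v v)) ^^ k) (red p v) = red p ((x [^]\<^bsub>(SL_group :: (int^'n::finite^'n) monoid)\<^esub> k) *v v)"
proof (induction k arbitrary: v)
  case 0 then show ?case by simp
next
  case (Suc k)
  have "((\<lambda>v. red p (x *v v)) ^^ Suc k) (red p v) = ((\<lambda>v. red p (x *v v)) ^^ k) (red p (x *v red p v))"
    by (simp add: funpow_Suc_right del: funpow.simps)
  also have "\<dots> = ((\<lambda>v. red p (x *v v)) ^^ k) (red p (x *v v))" by (simp add: red_mult)
  also have "\<dots> = red p ((x [^]\<^bsub>(SL_group :: (int^'n::finite^'n) monoid)\<^esub> k) *v (x *v v))" by (rule Suc.IH)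
  also have "\<dots> = red p ((x [^]\<^bsub>(SL_group :: (int^'n::finite^'n) monoid)\<^esub> Suc k) *v v)"
    by (simp add: matrix_vector_mul_assoc)
  finally show ?case .
qed

definition Vp :: "int \<Rightarrow> (int^'n::finite) set" where
  "Vp p = {v. \<forall>r. v $ r \<in> {0..<p}}"

lemma Vp_finite_card: "finite (Vp p :: (int^'n::finite) set) \<and> card (Vp p :: (int^'n::finite) set) \<le> nat p ^ CARD('n)"
proof -
  have sub: "(Vp p :: (int^'n::finite) set) \<subseteq> vec_lambda ` (PiE UNIV (\<lambda>_. {0..<p}))"
  proof
    fix v :: "int^'n" assume "v \<in> Vp p"
    then have "vec_nth v \<in> PiE UNIV (\<lambda>_. {0..<p})" by (auto simp: Vp_def)
    then show "v \<in> vec_lambda ` (PiE UNIV (\<lambda>_. {0..<p}))" by (metis image_eqI vec_nth_inverse)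
  qed
  have fP: "finite (PiE (UNIV :: 'n set) (\<lambda>_. {0..<p}))" by (simp add: finite_PiE)
  have "card (Vp p :: (int^'n::finite) set) \<le> card (vec_lambda ` (PiE (UNIV :: 'n set) (\<lambda>_. {0..<p})))"
    by (rule card_mono[OF _ sub]) (use fP in simp)
  also have "\<dots> \<le> card (PiE (UNIV :: 'n set) (\<lambda>_. {0..<p}))" by (rule card_image_le[OF fP])
  also have "\<dots> = nat p ^ CARD('n)" by (simp add: card_PiE)
  finally show ?thesis using finite_subset[OF sub] fP by blast
qed

definition unitv :: "'n::finite \<Rightarrow> int^'n" where "unitv b = (\<chi> r. if r = b then 1 else 0)"

lemma unitv_nth [simp]: "unitv b $ r = (if r = b then 1 else 0)"
  by (simp add: unitv_def)

lemma mult_unitv: "(A *v unitv b) $ r = A $ r $ b"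
proof -
  have "(\<Sum>k\<in>UNIV. A $ r $ k * (if k = b then 1 else 0)) = (\<Sum>k\<in>UNIV. if k = b then A $ r $ k else 0)"
    by (rule sum.cong) auto
  then show ?thesis by (simp add: matrix_vector_mult_def)
qed

lemma Tr_unitv: "(Tr a b c *v unitv b) $ r = (if r = b then 1 else 0) + (if r = a then c else 0)"
  by (simp add: mult_unitv Tr_def Ec_def mat_def)

lemma red_Tr_unitv:
  assumes ab: "a \<noteq> b" and q: "1 < q"
  shows "red q (Tr a b c *v unitv b) = unitv b \<longleftrightarrow> c mod q = 0"
proof
  assume "red q (Tr a b c *v unitv b) = unitv b"
  then have "red q (Tr a b c *v unitv b) $ a = unitv b $ a" by simp
  then show "c mod q = 0" using ab by (simp add: red_def Tr_unitv)
next
  assume c: "c mod q = 0"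
  have m1: "1 mod q = 1" using q by simp
  show "red q (Tr a b c *v unitv b) = unitv b"
  proof (subst vec_eq_iff, intro allI)
    fix r
    show "red q (Tr a b c *v unitv b) $ r = unitv b $ r"
    proof (cases "r = b")
      case True
      then have "r \<noteq> a" using ab by blast
      then show ?thesis using True m1 by (simp add: red_def Tr_unitv)
    next
      case False
      then show ?thesis using c by (cases "r = a") (simp_all add: red_def Tr_unitv)
    qed
  qed
qed

context ijl begin

lemma power_obstruction:
  assumes x: "x \<in> carrier SL_group" and p: "prime (p::nat)"
    and pw: "x [^]\<^bsub>SL_group\<^esub> (p ^ CARD('n)) = Tr i l N"
  shows "int p dvd N"
proof -
  have c0: "(int p * N) mod int p = 0" by (rule mod_mult_self1_is_0)
  interpret monoid "SL_group :: (int^'n^'n) monoid" by (rule SL_monoid)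
  have p1: "p > 1" using p prime_gt_1_nat by blast
  have m1: "1 mod int p = 1" using p1 by (simp add: mod_pos_pos_trivial)
  define T where "T = (\<lambda>v. red (int p) (x *v v))"
  define e where "e = unitv l"
  have rede: "red (int p) e = e" using p1 by (simp add: red_def e_def unitv_def vec_eq_iff)
  have eV: "e \<in> Vp (int p)" using p1 by (simp add: Vp_def e_def unitv_def)
  have TV: "T ` Vp (int p) \<subseteq> Vp (int p)" using p1 by (auto simp: T_def Vp_def red_def)
  have Titer: "(T ^^ k) e = red (int p) ((x [^]\<^bsub>SL_group\<^esub> k) *v e)" for k
    using red_iter[where p="int p" and x=x and k=k and v=e] rede unfolding T_def by simp
  have "x [^]\<^bsub>SL_group\<^esub> (p ^ Suc (CARD('n))) = (x [^]\<^bsub>SL_group\<^esub> (p ^ CARD('n))) [^]\<^bsub>SL_group\<^esub> p"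
    using nat_pow_pow[OF x] by (simp add: mult.commute)
  also have "\<dots> = Tr i l (int p * N)" using pw Tr_pow[OF il] by simp
  finally have big: "x [^]\<^bsub>SL_group\<^esub> (p ^ Suc (CARD('n))) = Tr i l (int p * N)" .
  have q1: "1 < int p" using p1 by simp
  have r1: "red (int p) (Tr i l (int p * N) *v unitv l) = unitv l"
    by (rule red_Tr_unitv[OF il q1, THEN iffD2, OF c0])
  have "(T ^^ (p ^ Suc (CARD('n)))) e = e"
    unfolding Titer big unfolding e_def by (rule r1)
  moreover have fc: "finite (Vp (int p) :: (int^'n) set)" "card (Vp (int p) :: (int^'n) set) \<le> p ^ CARD('n)"
    using Vp_finite_card[of "int p", where 'n='n] by auto
  ultimately have "(T ^^ (p ^ CARD('n))) e = e"
    by (intro period_lemma[OF fc(1) TV eV p _ fc(2)]) 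
  then have "red (int p) (Tr i l N *v e) = e" using Titer pw by simp
  then have "red (int p) (Tr i l N *v unitv l) = unitv l" unfolding e_def .
  then have "N mod int p = 0" using red_Tr_unitv[OF il q1, of N] by blast
  then show ?thesis by (simp add: dvd_eq_mod_eq_0)
qed

end




definition ispow :: "('a, 'b) monoid_scheme \<Rightarrow> nat \<Rightarrow> 'a \<Rightarrow> bool" where
  "ispow G q g \<longleftrightarrow> (\<exists>x\<in>carrier G. x [^]\<^bsub>G\<^esub> q = g)"

lemma iso_one:
  assumes "monoid G" "\<phi> \<in> iso G G"
  shows "\<phi> \<one>\<^bsub>G\<^esub> = \<one>\<^bsub>G\<^esub>"
proof -
  interpret monoid G by fact
  have hom: "\<phi> \<in> hom G G" and bij: "bij_betw \<phi> (carrier G) (carrier G)"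
    using assms(2) by (auto simp: iso_def)
  obtain y where y: "y \<in> carrier G" "\<phi> y = \<one>\<^bsub>G\<^esub>" using bij one_closed
    by (metis bij_betw_imp_surj_on imageE)
  have "\<phi> \<one>\<^bsub>G\<^esub> \<in> carrier G" using hom by (auto simp: hom_def)
  then have "\<phi> \<one>\<^bsub>G\<^esub> = \<phi> \<one>\<^bsub>G\<^esub> \<otimes>\<^bsub>G\<^esub> \<phi> y" using y by simp
  also have "\<dots> = \<phi> (\<one>\<^bsub>G\<^esub> \<otimes>\<^bsub>G\<^esub> y)" by (rule hom_mult[OF hom one_closed y(1), symmetric])
  also have "\<dots> = \<one>\<^bsub>G\<^esub>" using y by simp
  finally show ?thesis .
qed

lemma iso_pow:
  assumes "monoid G" "\<phi> \<in> iso G G" "x \<in> carrier G"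
  shows "\<phi> (x [^]\<^bsub>G\<^esub> (k::nat)) = \<phi> x [^]\<^bsub>G\<^esub> k"
proof (induction k)
  case 0 then show ?case using iso_one[OF assms(1,2)] by simp
next
  case (Suc k)
  interpret monoid G by fact
  have hom: "\<phi> \<in> hom G G" using assms(2) by (auto simp: iso_def)
  have "\<phi> (x [^]\<^bsub>G\<^esub> Suc k) = \<phi> (x [^]\<^bsub>G\<^esub> k \<otimes>\<^bsub>G\<^esub> x)" by simp
  also have "\<dots> = \<phi> (x [^]\<^bsub>G\<^esub> k) \<otimes>\<^bsub>G\<^esub> \<phi> x" using hom assms(3) by (auto simp: hom_def)
  also have "\<dots> = \<phi> x [^]\<^bsub>G\<^esub> Suc k" using Suc by simp
  finally show ?case .
qed

lemma ispow_iso: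
  assumes "monoid G" "\<phi> \<in> iso G G" "ispow G q g"
  shows "ispow G q (\<phi> g)"
proof -
  obtain x where x: "x \<in> carrier G" "x [^]\<^bsub>G\<^esub> q = g" using assms(3) by (auto simp: ispow_def)
  have "\<phi> x \<in> carrier G" using assms(2) x(1) by (auto simp: iso_def hom_def)
  moreover have "\<phi> x [^]\<^bsub>G\<^esub> q = \<phi> g" using iso_pow[OF assms(1,2) x(1), of q] x(2) by metis
  ultimately show ?thesis by (auto simp: ispow_def)
qed

lemma orbit_eq_imp:
  assumes "aut_orbit G g = aut_orbit G h"
  shows "\<exists>\<phi>\<in>iso G G. h = \<phi> g"
proof -
  have "h \<in> aut_orbit G h" unfolding aut_orbit_def using id_iso[of G] by (metis (mono_tags, lifting) id_apply mem_Collect_eq)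
  then show ?thesis using assms unfolding aut_orbit_def by blast
qed

lemma ispow_orbit:
  assumes "monoid G" "aut_orbit G g = aut_orbit G h"
  shows "ispow G q g \<longleftrightarrow> ispow G q h"
proof -
  obtain \<phi> where "\<phi> \<in> iso G G" "h = \<phi> g" using orbit_eq_imp[OF assms(2)] by blast
  moreover obtain \<psi> where "\<psi> \<in> iso G G" "g = \<psi> h" using orbit_eq_imp[OF assms(2)[symmetric]] by blast
  ultimately show ?thesis using ispow_iso[OF assms(1)] by metis
qed

lemma squarefree_eq:
  fixes s s' :: nat
  assumes "squarefree s" "squarefree s'" "\<And>p. prime p \<Longrightarrow> p dvd s \<longleftrightarrow> p dvd s'"
  shows "s = s'"
proof -
  have nz: "s \<noteq> 0" "s' \<noteq> 0" using assms(1,2) not_squarefree_0 by metis+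
  have pos: "0 < s" "0 < s'" using nz by auto
  have mult: "multiplicity p s = multiplicity p s'" if p: "prime p" for p
  proof -
    have "multiplicity p s \<le> 1" "multiplicity p s' \<le> 1"
      using assms(1,2) nz p squarefree_factorial_semiring'' by blast+
    moreover have "multiplicity p s > 0 \<longleftrightarrow> multiplicity p s' > 0"
      using prime_multiplicity_gt_zero_iff[of p s] prime_multiplicity_gt_zero_iff[of p s'] p nz assms(3)[OF p]
      by simp
    ultimately show ?thesis by linarith
  qed
  show ?thesis by (rule multiplicity_eq_nat[OF pos(1) pos(2)]) (rule mult)
qed

context ijl begin

definition gs :: "nat \<Rightarrow> int^'n^'n" where "gs s = Tr i l (int s ^ CARD('n))"

lemma gs_carrier: "gs s \<in> carrier SL_group"
  unfolding gs_def by (rule Tr_carrier[OF il])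

lemma ispow_gs:
  assumes p: "prime p"
  shows "ispow SL_group (p ^ CARD('n)) (gs s) \<longleftrightarrow> p dvd s"
proof
  assume "ispow SL_group (p ^ CARD('n)) (gs s)"
  then obtain x where x: "x \<in> carrier SL_group" "x [^]\<^bsub>SL_group\<^esub> (p ^ CARD('n)) = Tr i l (int s ^ CARD('n))"
    by (auto simp: ispow_def gs_def)
  have "int p dvd int s ^ CARD('n)" by (rule power_obstruction[OF x(1) p x(2)])
  then have "p dvd s ^ CARD('n)" by (metis of_nat_dvd_iff of_nat_power)
  then show "p dvd s" using p prime_dvd_power by blast
next
  assume "p dvd s"
  then obtain t where t: "s = p * t" by blast
  have "Tr i l (int t ^ CARD('n)) [^]\<^bsub>SL_group\<^esub> (p ^ CARD('n)) = Tr i l (int (p ^ CARD('n)) * int t ^ CARD('n))"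
    by (rule Tr_pow[OF il])
  also have "\<dots> = gs s" unfolding gs_def t by (simp add: power_mult_distrib)
  finally show "ispow SL_group (p ^ CARD('n)) (gs s)"
    unfolding ispow_def using Tr_carrier[OF il] by blast
qed

lemma gs_inj:
  assumes "squarefree s" "squarefree s'"
    and "aut_orbit SL_group (gs s) = aut_orbit SL_group (gs s')"
  shows "s = s'"
proof (rule squarefree_eq[OF assms(1,2)])
  fix p :: nat assume p: "prime p"
  show "p dvd s \<longleftrightarrow> p dvd s'"
    using ispow_orbit[OF SL_monoid assms(3), of "p ^ CARD('n)"] ispow_gs[OF p] by simp
qed

end




fun cc :: "nat \<Rightarrow> int" where
  "cc 0 = 2"
| "cc (Suc 0) = 3"
| "cc (Suc (Suc k)) = 3 * cc (Suc k) - cc k"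

lemma cc_mono: "0 \<le> cc k \<and> cc k \<le> cc (Suc k)"
  by (induction k rule: cc.induct) auto

lemma cc_le3: "cc (Suc k) \<le> 3 * cc k"
  by (cases k rule: cc.cases) (use cc_mono in auto)

lemma cc_ge: "2 ^ k \<le> cc k"
proof (induction k rule: cc.induct)
  case (3 k)
  have "cc (Suc k) \<le> cc (Suc (Suc k)) - cc (Suc k)" using cc_mono[of k] by simp
  then show ?case using 3 by simp
qed auto

lemma cc_pos: "0 < cc k"
  using cc_ge[of k] by (smt (verit) zero_less_power)

lemma greedy:
  "0 \<le> N \<Longrightarrow> N < cc t \<Longrightarrow> \<exists>ds r. length ds = t \<and> set ds \<subseteq> {0,1,2} \<and> r \<in> {0,1} \<and>
     N = r + (\<Sum>k<t. ds ! k * cc k)"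
proof (induction t arbitrary: N)
  case 0
  then show ?case by (intro exI[of _ "[]"] exI[of _ N]) auto
next
  case (Suc t)
  define d where "d = N div cc t"
  define N' where "N' = N mod cc t"
  have pos: "0 < cc t" by (rule cc_pos)
  have N': "0 \<le> N'" "N' < cc t" unfolding N'_def using pos by auto
  obtain ds r where ds: "length ds = t" "set ds \<subseteq> {0,1,2}" "r \<in> {0,1}" "N' = r + (\<Sum>k<t. ds ! k * cc k)"
    using Suc.IH[OF N'] by blast
  have Nd: "N = d * cc t + N'" unfolding d_def N'_def by simp
  have "N < 3 * cc t" using Suc.prems(2) cc_le3[of t] by simp
  then have "d * cc t < 3 * cc t" using Nd N' by linarith
  then have "d < 3" using pos by (simp add: mult_less_cancel_right)
  moreover have "-1 < d"
  proof (rule ccontr)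
    assume "\<not> -1 < d"
    then have "d * cc t \<le> (-1) * cc t" using pos by (intro mult_right_mono) auto
    then show False using Nd N' Suc.prems(1) by linarith
  qed
  ultimately have dd: "d \<in> {0,1,2}" by auto
  have sum: "(\<Sum>k<Suc t. (ds @ [d]) ! k * cc k) = (\<Sum>k<t. ds ! k * cc k) + d * cc t"
  proof -
    have "(\<Sum>k<t. (ds @ [d]) ! k * cc k) = (\<Sum>k<t. ds ! k * cc k)"
      by (rule sum.cong) (use ds(1) in \<open>auto simp: nth_append\<close>)
    moreover have "(ds @ [d]) ! t = d" using ds(1) by (simp add: nth_append)
    ultimately show ?thesis by simp
  qed
  show ?case
    by (intro exI[of _ "ds @ [d]"] exI[of _ r]) (use ds dd Nd sum in auto)
qed

definition Aact :: "int \<times> int \<Rightarrow> int \<times> int" where "Aact v = (2 * fst v + snd v, fst v + snd v)"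
definition Bact :: "int \<times> int \<Rightarrow> int \<times> int" where "Bact v = (fst v - snd v, 2 * snd v - fst v)"

lemma Aact_simps [simp]: "fst (Aact v) = 2 * fst v + snd v" "snd (Aact v) = fst v + snd v"
  by (simp_all add: Aact_def)
lemma Bact_simps [simp]: "fst (Bact v) = fst v - snd v" "snd (Bact v) = 2 * snd v - fst v"
  by (simp_all add: Bact_def)

definition VA :: "int list \<Rightarrow> int \<times> int" where
  "VA ds = foldr (\<lambda>d v. (d + fst (Aact v), snd (Aact v))) ds (0, 0)"
definition VB :: "int list \<Rightarrow> int \<times> int" where
  "VB ds = foldr (\<lambda>d v. (d + fst (Bact v), snd (Bact v))) ds (0, 0)"

lemma VA_sum: "VA ds = ((\<Sum>k<length ds. ds ! k * fst ((Aact ^^ k) (1, 0))),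
                        (\<Sum>k<length ds. ds ! k * snd ((Aact ^^ k) (1, 0))))"
proof (induction ds)
  case Nil then show ?case by (simp add: VA_def)
next
  case (Cons d ds)
  have "VA (d # ds) = (d + fst (Aact (VA ds)), snd (Aact (VA ds)))" by (simp add: VA_def)
  then show ?case using Cons
    by (simp del: sum.lessThan_Suc add: sum.lessThan_Suc_shift sum.distrib sum_distrib_left algebra_simps)
qed

lemma VB_sum: "VB ds = ((\<Sum>k<length ds. ds ! k * fst ((Bact ^^ k) (1, 0))),
                        (\<Sum>k<length ds. ds ! k * snd ((Bact ^^ k) (1, 0))))"
proof (induction ds)
  case Nil then show ?case by (simp add: VB_def)
next
  case (Cons d ds)
  have "VB (d # ds) = (d + fst (Bact (VB ds)), snd (Bact (VB ds)))" by (simp add: VB_def)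
  then show ?case using Cons
    by (simp del: sum.lessThan_Suc add: sum.lessThan_Suc_shift sum.distrib sum_distrib_left algebra_simps sum_subtractf)
qed

lemma AB_cc: "fst ((Aact ^^ k) (1, 0)) + fst ((Bact ^^ k) (1, 0)) = cc k \<and>
              snd ((Aact ^^ k) (1, 0)) + snd ((Bact ^^ k) (1, 0)) = 0"
proof (induction k rule: cc.induct)
  case 1 then show ?case by simp
next
  case 2 then show ?case by simp
next
  case (3 k)
  have A2: "(Aact ^^ Suc (Suc k)) v = (3 * fst ((Aact ^^ Suc k) v) - fst ((Aact ^^ k) v),
                                        3 * snd ((Aact ^^ Suc k) v) - snd ((Aact ^^ k) v))" for v
    by (simp add: prod_eq_iff algebra_simps)
  have B2: "(Bact ^^ Suc (Suc k)) v = (3 * fst ((Bact ^^ Suc k) v) - fst ((Bact ^^ k) v),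
                                        3 * snd ((Bact ^^ Suc k) v) - snd ((Bact ^^ k) v))" for v
    by (simp add: prod_eq_iff algebra_simps)
  show ?case unfolding A2 B2 using 3 by (simp add: algebra_simps)
qed

lemma VAB: "fst (VA ds) + fst (VB ds) = (\<Sum>k<length ds. ds ! k * cc k) \<and> snd (VA ds) + snd (VB ds) = 0"
proof -
  have "fst (VA ds) + fst (VB ds) = (\<Sum>k<length ds. ds ! k * (fst ((Aact ^^ k) (1, 0)) + fst ((Bact ^^ k) (1, 0))))"
    by (simp add: VA_sum VB_sum sum.distrib[symmetric] algebra_simps)
  moreover have "snd (VA ds) + snd (VB ds) = (\<Sum>k<length ds. ds ! k * (snd ((Aact ^^ k) (1, 0)) + snd ((Bact ^^ k) (1, 0))))"
    by (simp add: VA_sum VB_sum sum.distrib[symmetric] algebra_simps)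
  ultimately show ?thesis using AB_cc by simp
qed




lemma SL_mult_carrier: "a \<in> carrier SL_group \<Longrightarrow> b \<in> carrier SL_group \<Longrightarrow> a ** b \<in> carrier (SL_group :: (int^'n::finite^'n) monoid)"
  by (simp add: SL_carrier det_mul)

lemma wl_one: "word_length (SL_group :: (int^'n::finite^'n) monoid) S (mat 1) = 0"
  using wl_le[of "[]" S "SL_group :: (int^'n::finite^'n) monoid"] by simp

context ijl begin

definition HA :: "int list \<Rightarrow> int^'n^'n" where
  "HA ds = foldr (\<lambda>d acc. u d 0 ** (Am ** acc ** Ami)) ds (mat 1)"
definition HB :: "int list \<Rightarrow> int^'n^'n" where
  "HB ds = foldr (\<lambda>d acc. u d 0 ** (Ami ** acc ** Am)) ds (mat 1)"

lemma u00: "u 0 0 = mat 1" by (simp add: u_eq)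

lemma u_Tr: "u a 0 = Tr i l a" by (simp add: u_eq Tr_def)

lemma HA_eq: "HA ds = u (fst (VA ds)) (snd (VA ds))"
proof (induction ds)
  case Nil then show ?case by (simp add: HA_def VA_def u00)
next
  case (Cons d ds)
  have "HA (d # ds) = u d 0 ** (Am ** HA ds ** Ami)" by (simp add: HA_def)
  also have "\<dots> = u (fst (VA (d # ds))) (snd (VA (d # ds)))"
    unfolding Cons conjA u_mult by (simp add: VA_def)
  finally show ?case .
qed

lemma HB_eq: "HB ds = u (fst (VB ds)) (snd (VB ds))"
proof (induction ds)
  case Nil then show ?case by (simp add: HB_def VB_def u00)
next
  case (Cons d ds)
  have "HB (d # ds) = u d 0 ** (Ami ** HB ds ** Am)" by (simp add: HB_def)
  also have "\<dots> = u (fst (VB (d # ds))) (snd (VB (d # ds)))"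
    unfolding Cons conjAi u_mult by (simp add: VB_def)
  finally show ?case .
qed

lemma gs_decomp:
  assumes "int s ^ CARD('n) = r + (\<Sum>k<length ds. ds ! k * cc k)"
  shows "gs s = u r 0 ** HA ds ** HB ds"
proof -
  have "u r 0 ** HA ds ** HB ds = u (r + fst (VA ds) + fst (VB ds)) (snd (VA ds) + snd (VB ds))"
    unfolding HA_eq HB_eq u_mult by simp
  also have "\<dots> = u (int s ^ CARD('n)) 0" using VAB[of ds] assms by (simp add: add.assoc)
  finally show ?thesis by (simp add: gs_def u_Tr)
qed

context
  fixes S :: "(int^'n^'n) set"
  assumes gen: "generate (SL_group :: (int^'n^'n) monoid) S = carrier SL_group"
begin

abbreviation "len g \<equiv> word_length (SL_group :: (int^'n^'n) monoid) S g"

definition "Dc = len (u 0 0) + len (u 1 0) + len (u 2 0)"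
definition "Ec' = Dc + len Am + len Ami"

lemma len_digit: "d \<in> {0,1,2} \<Longrightarrow> len (u d 0) \<le> Dc"
  unfolding Dc_def by auto

lemma len_mult: "a \<in> carrier SL_group \<Longrightarrow> b \<in> carrier SL_group \<Longrightarrow> len (a ** b) \<le> len a + len b"
  by (rule wl_mult[OF gen])

lemma len_HA: "set ds \<subseteq> {0,1,2} \<Longrightarrow> len (HA ds) \<le> Ec' * length ds"
proof (induction ds)
  case Nil then show ?case by (simp add: HA_def wl_one)
next
  case (Cons d ds)
  have c: "HA ds \<in> carrier SL_group" unfolding HA_eq by (rule u_carrier)
  have c1: "Am ** HA ds \<in> carrier SL_group" by (rule SL_mult_carrier[OF Am_carrier c])
  have c2: "Am ** HA ds ** Ami \<in> carrier SL_group" by (rule SL_mult_carrier[OF c1 Ami_carrier])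
  have "len (HA (d # ds)) = len (u d 0 ** (Am ** HA ds ** Ami))" by (simp add: HA_def)
  also have "\<dots> \<le> len (u d 0) + len (Am ** HA ds ** Ami)" by (rule len_mult[OF u_carrier c2])
  also have "\<dots> \<le> len (u d 0) + (len (Am ** HA ds) + len Ami)"
    using len_mult[OF c1 Ami_carrier] by simp
  also have "\<dots> \<le> len (u d 0) + (len Am + len (HA ds) + len Ami)"
    using len_mult[OF Am_carrier c] by simp
  also have "\<dots> \<le> Dc + (len Am + Ec' * length ds + len Ami)"
    using len_digit[of d] Cons by simp
  also have "\<dots> = Ec' * length (d # ds)" by (simp add: Ec'_def)
  finally show ?case .
qed

lemma len_HB: "set ds \<subseteq> {0,1,2} \<Longrightarrow> len (HB ds) \<le> Ec' * length ds"
proof (induction ds)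
  case Nil then show ?case by (simp add: HB_def wl_one)
next
  case (Cons d ds)
  have c: "HB ds \<in> carrier SL_group" unfolding HB_eq by (rule u_carrier)
  have c1: "Ami ** HB ds \<in> carrier SL_group" by (rule SL_mult_carrier[OF Ami_carrier c])
  have c2: "Ami ** HB ds ** Am \<in> carrier SL_group" by (rule SL_mult_carrier[OF c1 Am_carrier])
  have "len (HB (d # ds)) = len (u d 0 ** (Ami ** HB ds ** Am))" by (simp add: HB_def)
  also have "\<dots> \<le> len (u d 0) + len (Ami ** HB ds ** Am)" by (rule len_mult[OF u_carrier c2])
  also have "\<dots> \<le> len (u d 0) + (len (Ami ** HB ds) + len Am)"
    using len_mult[OF c1 Am_carrier] by simp
  also have "\<dots> \<le> len (u d 0) + (len Ami + len (HB ds) + len Am)"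
    using len_mult[OF Ami_carrier c] by simp
  also have "\<dots> \<le> Dc + (len Ami + Ec' * length ds + len Am)"
    using len_digit[of d] Cons by simp
  also have "\<dots> = Ec' * length (d # ds)" by (simp add: Ec'_def)
  finally show ?case .
qed

lemma gs_len:
  assumes s: "s \<le> 2 ^ (n + 2)"
  shows "len (gs s) \<le> (Dc + 2 * Ec' * (2 * CARD('n) + 1) + 1) * n + (Dc + 2 * Ec' * (2 * CARD('n) + 1) + 1)"
proof -
  define M where "M = CARD('n)"
  define t where "t = (n + 2) * M + 1"
  have "s ^ M \<le> (2 ^ (n + 2)) ^ M" using s by (rule power_mono) simp
  also have "\<dots> = 2 ^ ((n + 2) * M)" by (simp only: power_mult)
  also have "\<dots> < 2 ^ t" unfolding t_def by simp
  finally have "int (s ^ M) < 2 ^ t" by (metis of_nat_less_iff of_nat_numeral of_nat_power)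
  also have "\<dots> \<le> cc t" by (rule cc_ge)
  finally have lt: "int s ^ M < cc t" by simp
  obtain ds r where g: "length ds = t" "set ds \<subseteq> {0,1,2}" "r \<in> {0,1}"
    "int s ^ M = r + (\<Sum>k<t. ds ! k * cc k)"
    using greedy[OF _ lt] by auto
  have dec: "gs s = u r 0 ** HA ds ** HB ds" by (rule gs_decomp) (use g in \<open>simp add: M_def\<close>)
  have c: "HA ds \<in> carrier SL_group" "HB ds \<in> carrier SL_group"
    unfolding HA_eq HB_eq by (rule u_carrier)+
  have "len (gs s) \<le> len (u r 0 ** HA ds) + len (HB ds)"
    unfolding dec by (rule len_mult[OF SL_mult_carrier[OF u_carrier c(1)] c(2)])
  also have "\<dots> \<le> len (u r 0) + len (HA ds) + len (HB ds)"
    using len_mult[OF u_carrier c(1)] by simp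
  also have "\<dots> \<le> Dc + Ec' * t + Ec' * t"
    using len_digit[of r] g(3) len_HA[OF g(2)] len_HB[OF g(2)] g(1) by fastforce
  also have "\<dots> \<le> Dc + 2 * Ec' * ((2 * M + 1) * (n + 1))"
  proof -
    have "t \<le> (2 * M + 1) * (n + 1)" unfolding t_def by (simp add: algebra_simps)
    then have "Ec' * t \<le> Ec' * ((2 * M + 1) * (n + 1))" by (rule mult_left_mono) simp
    then show ?thesis by simp
  qed
  also have "\<dots> \<le> (Dc + 2 * Ec' * (2 * M + 1) + 1) * n + (Dc + 2 * Ec' * (2 * M + 1) + 1)"
    by (simp add: algebra_simps)
  finally show ?thesis unfolding M_def .
qed

end

end




lemma tele: "K \<ge> 2 \<Longrightarrow> (\<Sum>d\<in>{3..K}. 1 / (real d)^2) \<le> 1/2 - 1 / real K"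
proof (induction K rule: nat_induct_at_least)
  case base then show ?case by simp
next
  case (Suc K)
  have "{3..Suc K} = insert (Suc K) {3..K}" using Suc.hyps by auto
  then have "(\<Sum>d\<in>{3..Suc K}. 1 / (real d)^2) = 1 / (real (Suc K))^2 + (\<Sum>d\<in>{3..K}. 1 / (real d)^2)"
    by simp
  also have "\<dots> \<le> 1 / (real (Suc K))^2 + (1/2 - 1 / real K)" using Suc.IH by simp
  also have "\<dots> \<le> 1/2 - 1 / real (Suc K)"
  proof -
    have K: "real K \<ge> 2" using Suc.hyps by simp
    have le: "real K * real (Suc K) \<le> (real (Suc K))^2" by (simp add: power2_eq_square)
    have "1 / (real (Suc K))^2 \<le> 1 / (real K * real (Suc K))"
      by (rule divide_left_mono[OF le]) (use K in auto)
    also have "\<dots> = 1 / real K - 1 / real (Suc K)" using K by (simp add: field_simps)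
    finally have "1 / (real (Suc K))^2 \<le> 1 / real K - 1 / real (Suc K)" .
    then show ?thesis by simp
  qed
  finally show ?case .
qed

lemma mult_count: "d > 0 \<Longrightarrow> card {s\<in>{1..K}. (d::nat) dvd s} \<le> K div d"
proof -
  assume d: "d > 0"
  have "{s\<in>{1..K}. d dvd s} \<subseteq> (\<lambda>q. d * q) ` {1..K div d}"
  proof
    fix s assume "s \<in> {s\<in>{1..K}. d dvd s}"
    then obtain q where q: "s = d * q" "1 \<le> s" "s \<le> K" by auto
    then have "q \<ge> 1" by (cases q) auto
    moreover have "q \<le> K div d" using q d by (metis div_le_mono nonzero_mult_div_cancel_left not_gr0)
    ultimately show "s \<in> (\<lambda>q. d * q) ` {1..K div d}" using q by auto
  qed
  then have "card {s\<in>{1..K}. d dvd s} \<le> card ((\<lambda>q. d * q) ` {1..K div d})"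
    by (rule card_mono[rotated]) simp
  also have "\<dots> \<le> card {1..K div d}" by (rule card_image_le) simp
  finally show ?thesis by simp
qed

lemma sf_count: "K \<le> 4 * card {s\<in>{1..K}. squarefree (s::nat)}"
proof -
  define SF where "SF = {s\<in>{1..K}. squarefree s}"
  define NS where "NS = {s\<in>{1..K}. \<not> squarefree s}"
  have split: "{1..K} = SF \<union> NS" "SF \<inter> NS = {}" unfolding SF_def NS_def by auto
  have fin: "finite SF" "finite NS" unfolding SF_def NS_def by auto
  have "K = card {1..K}" by simp
  also have "\<dots> = card (SF \<union> NS)" using split(1) by simp
  also have "\<dots> = card SF + card NS" by (rule card_Un_disjoint[OF fin split(2)])
  finally have cardK: "K = card SF + card NS" .
  have NSsub: "NS \<subseteq> (\<Union>d\<in>{2..K}. {s\<in>{1..K}. d^2 dvd s})"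
  proof
    fix s assume "s \<in> NS"
    then have s: "1 \<le> s" "s \<le> K" "\<not> squarefree s" by (auto simp: NS_def)
    then obtain x where x: "x^2 dvd s" "\<not> x dvd 1" by (auto elim: not_squarefreeE)
    have "x \<noteq> 0" using x(1) s(1) by (auto simp: power2_eq_square)
    moreover have "x \<noteq> 1" using x(2) by auto
    ultimately have x2: "x \<ge> 2" using less_2_cases[of x] by force
    moreover have "x \<le> s"
    proof -
      have "x \<le> x^2" by (simp add: power2_eq_square)
      also have "\<dots> \<le> s" using x(1) s(1) by (simp add: dvd_imp_le)
      finally show ?thesis .
    qed
    ultimately have "x \<in> {2..K}" using s(2) by simp
    moreover have "s \<in> {s\<in>{1..K}. x^2 dvd s}" using s(1,2) x(1) by simp
    ultimately show "s \<in> (\<Union>d\<in>{2..K}. {s\<in>{1..K}. d^2 dvd s})" by blast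
  qed
  have "card NS \<le> card (\<Union>d\<in>{2..K}. {s\<in>{1..K}. d^2 dvd s})"
    by (rule card_mono[OF _ NSsub]) auto
  also have "\<dots> \<le> (\<Sum>d\<in>{2..K}. card {s\<in>{1..K}. d^2 dvd s})"
    by (rule card_UN_le) simp
  also have "\<dots> \<le> (\<Sum>d\<in>{2..K}. K div d^2)"
    by (rule sum_mono) (rule mult_count, simp)
  finally have NS1: "real (card NS) \<le> (\<Sum>d\<in>{2..K}. real (K div d^2))" by (simp flip: of_nat_sum)
  also have "\<dots> \<le> (\<Sum>d\<in>{2..K}. real K * (1 / (real d)^2))"
    by (rule sum_mono) (metis of_nat_div_le_of_nat of_nat_power times_divide_eq_right mult_1_right)
  also have "\<dots> \<le> 3/4 * real K"
  proof (cases "K \<ge> 2")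
    case True
    have "{2..K} = insert 2 {3..K}" using True by auto
    then have "(\<Sum>d\<in>{2..K}. real K * (1 / (real d)^2)) = real K / 4 + real K * (\<Sum>d\<in>{3..K}. 1 / (real d)^2)"
      by (simp add: sum_distrib_left)
    also have "\<dots> \<le> real K / 4 + real K * (1/2)"
    proof -
      have "0 \<le> 1 / real K" by simp
      then have "(\<Sum>d\<in>{3..K}. 1 / (real d)^2) \<le> 1/2" using tele[OF True] by linarith
      then show ?thesis by (intro add_left_mono mult_left_mono) auto
    qed
    finally show ?thesis by simp
  next
    case False
    then have "{2..K} = {}" by auto
    then show ?thesis by simp
  qed
  finally have "real (card NS) \<le> 3/4 * real K" .
  then have "real K \<le> 4 * real (card SF)" using cardK by simp
  then show ?thesis unfolding SF_def by linarith
qed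




theorem mainTheorem18:
  fixes S :: "(int ^ 'n::finite ^ 'n) set"
  assumes "CARD('n) \<ge> 3"
    and "finite S"
    and "S \<subseteq> carrier (SL_group :: (int ^ 'n ^ 'n) monoid)"
    and "generate (SL_group :: (int ^ 'n ^ 'n) monoid) S = carrier SL_group"
  shows "exponential_aut_growth (SL_group :: (int ^ 'n ^ 'n) monoid) S"
proof -
  note gen = assms(4) and fin = assms(2)
  obtain T :: "'n set" where "T \<subseteq> UNIV" "card T = 3"
    using obtain_subset_with_card_n[OF assms(1)] by metis
  then obtain i j l :: 'n where ijl: "i \<noteq> j" "j \<noteq> l" "i \<noteq> l"
    using card_3_iff by metis
  interpret ijl i j l by unfold_locales (use ijl in auto)
  have up: "growth_le (aut_growth SL_group S) (\<lambda>n. 2 ^ n)" by (rule upper_bound[OF gen fin])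
  define L where "L = Dc S + 2 * Ec' S * (2 * CARD('n) + 1) + 1"
  have low: "growth_le (\<lambda>n. 2 ^ n) (aut_growth (SL_group :: (int ^ 'n ^ 'n) monoid) S)"
    unfolding growth_le_def
  proof (intro exI[of _ L] conjI allI)
    show "L \<noteq> 0" unfolding L_def by simp
    fix n :: nat
    define K :: nat where "K = 2 ^ (n + 2)"
    define SFK where "SFK = {s\<in>{1..K}. squarefree s}"
    have c: "K \<le> 4 * card SFK" unfolding SFK_def by (rule sf_count)
    have img: "(\<lambda>s. aut_orbit SL_group (gs s)) ` SFK \<subseteq>
       {aut_orbit (SL_group :: (int ^ 'n ^ 'n) monoid) g | g. g \<in> carrier SL_group \<and> word_length SL_group S g \<le> L * n + L}"
    proof
      fix Ob assume "Ob \<in> (\<lambda>s. aut_orbit SL_group (gs s)) ` SFK"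
      then obtain s where s: "s \<in> SFK" "Ob = aut_orbit SL_group (gs s)" by blast
      have "s \<le> 2 ^ (n + 2)" using s(1) unfolding SFK_def K_def by simp
      then have "word_length SL_group S (gs s) \<le> L * n + L" unfolding L_def by (rule gs_len[OF gen])
      then show "Ob \<in> {aut_orbit (SL_group :: (int ^ 'n ^ 'n) monoid) g | g. g \<in> carrier SL_group \<and> word_length SL_group S g \<le> L * n + L}"
        using s(2) gs_carrier by blast
    qed
    have inj: "inj_on (\<lambda>s. aut_orbit SL_group (gs s)) SFK"
      by (rule inj_onI) (use gs_inj in \<open>auto simp: SFK_def\<close>)
    have "card SFK \<le> aut_growth SL_group S (L * n + L)"
      unfolding aut_growth_def by (rule card_inj_on_le[OF inj img aut_growth_finite[OF gen fin]])
    moreover have "2 ^ n \<le> card SFK" using c unfolding K_def by (simp add: power_add)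
    ultimately have "2 ^ n \<le> aut_growth SL_group S (L * n + L)" by linarith
    also have "\<dots> \<le> L * aut_growth SL_group S (L * n + L) + L"
    proof -
      have "1 * aut_growth SL_group S (L * n + L) \<le> L * aut_growth SL_group S (L * n + L)"
        using \<open>L \<noteq> 0\<close> by (intro mult_right_mono) auto
      then show ?thesis by linarith
    qed
    finally show "2 ^ n \<le> L * aut_growth SL_group S (L * n + L) + L" .
  qed
  show ?thesis unfolding exponential_aut_growth_def growth_equiv_def using up low by blast
qed


end
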